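(* Let $R$ be a commutative ring with nonzero identity, let $\delta$ be an expansion of ideals of $R$, and let $I$ be a proper ideal of $R$. The following statements are equivalent: (1) $I$ is a $\delta$-$n$-ideal of $R$. (2) $(I:a)\subseteq\sqrt{0}$ for all $a\in R\setminus\delta(I)$. (3) If $aJ\subseteq I$ for some $a\in R$ and some ideal $J$ of $R$, then $a\in\sqrt{0}$ or $J\subseteq\delta(I)$. (4) If $JK\subseteq I$ for some ideals $J,K$ of $R$, then $J\cap(R\setminus\sqrt{0})=\emptyset$ or $K\subseteq\delta(I)$.
   Context: An expansion of ideals of a ring $R$ is a map $\delta$ from the set of ideals of $R$ to itself such that $I\subseteq\delta(I)$ for every ideal $I$, and $\delta(I)\subseteq\delta(J)$ whenever $I\subseteq J$. $\sqrt{0}$ denotes the nilradical of $R$, and $(I:a)=\{r\in R: ra\in I\}$. Given an expansion $\delta$, a proper ideal $I$ of $R$ is a $\delta$-$n$-ideal if whenever $a,b\in R$ with $ab\in I$ and $a\notin\sqrt{0}$, then $b\in\delta(I)$. *)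

theory Defs
  imports "HOL-Algebra.Ideal_Product"
begin

definition nilrad :: "('a, 'b) ring_scheme \<Rightarrow> 'a set" where
  "nilrad R = {a \<in> carrier R. \<exists>n::nat. a [^]\<^bsub>R\<^esub> n = \<zero>\<^bsub>R\<^esub>}"

definition colon :: "('a, 'b) ring_scheme \<Rightarrow> 'a set \<Rightarrow> 'a \<Rightarrow> 'a set" where
  "colon R I a = {r \<in> carrier R. r \<otimes>\<^bsub>R\<^esub> a \<in> I}"

definition expansion :: "('a, 'b) ring_scheme \<Rightarrow> ('a set \<Rightarrow> 'a set) \<Rightarrow> bool" where
  "expansion R \<delta> \<longleftrightarrow>
     (\<forall>I. ideal I R \<longrightarrow> ideal (\<delta> I) R \<and> I \<subseteq> \<delta> I) \<and>
     (\<forall>I J. ideal I R \<longrightarrow> ideal J R \<longrightarrow> I \<subseteq> J \<longrightarrow> \<delta> I \<subseteq> \<delta> J)"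

definition delta_n_ideal :: "('a, 'b) ring_scheme \<Rightarrow> ('a set \<Rightarrow> 'a set) \<Rightarrow> 'a set \<Rightarrow> bool" where
  "delta_n_ideal R \<delta> I \<longleftrightarrow> ideal I R \<and> I \<noteq> carrier R \<and>
     (\<forall>a \<in> carrier R. \<forall>b \<in> carrier R.
        a \<otimes>\<^bsub>R\<^esub> b \<in> I \<longrightarrow> a \<notin> nilrad R \<longrightarrow> b \<in> \<delta> I)"

end

theory Submission
  imports Defs
begin

lemma disjCI: "(\<not> P \<Longrightarrow> Q) \<Longrightarrow> P \<or> Q" by blast

lemma (in cring) pidl_prod_sub:
  assumes I: "ideal I R" and a: "a \<in> carrier R" and b: "b \<in> carrier R"
    and ab: "a \<otimes>\<^bsub>R\<^esub> b \<in> I"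
  shows "(PIdl\<^bsub>R\<^esub> a) \<cdot>\<^bsub>R\<^esub> (PIdl\<^bsub>R\<^esub> b) \<subseteq> I"
proof
  interpret ideal I R by fact
  fix s assume "s \<in> (PIdl a) \<cdot> (PIdl b)"
  then show "s \<in> I"
  proof (induct s rule: ideal_prod.induct)
    case (prod i j)
    then obtain x y where x: "x \<in> carrier R" "i = x \<otimes> a" and y: "y \<in> carrier R" "j = y \<otimes> b"
      unfolding cgenideal_def by blast
    have "i \<otimes> j = (x \<otimes> y) \<otimes> (a \<otimes> b)" using x y a b by (simp add: m_ac)
    then show ?case using x y ab by (simp add: I_l_closed)
  next
    case (sum s1 s2) then show ?case by (simp add: a_closed)
  qed
qed

lemma (in cring) main:
  fixes \<delta> :: "'a set \<Rightarrow> 'a set" and I :: "'a set"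
  assumes "\<one>\<^bsub>R\<^esub> \<noteq> \<zero>\<^bsub>R\<^esub>"
    and "expansion R \<delta>"
    and "ideal I R" and "I \<noteq> carrier R"
  defines "P1 \<equiv> delta_n_ideal R \<delta> I"
    and "P2 \<equiv> (\<forall>a \<in> carrier R - \<delta> I. colon R I a \<subseteq> nilrad R)"
    and "P3 \<equiv> (\<forall>a \<in> carrier R. \<forall>J. ideal J R \<longrightarrow> (\<lambda>j. a \<otimes>\<^bsub>R\<^esub> j) ` J \<subseteq> I \<longrightarrow>
                 a \<in> nilrad R \<or> J \<subseteq> \<delta> I)"
    and "P4 \<equiv> (\<forall>J K. ideal J R \<longrightarrow> ideal K R \<longrightarrow> J \<cdot>\<^bsub>R\<^esub> K \<subseteq> I \<longrightarrow>
                 J \<inter> (carrier R - nilrad R) = {} \<or> K \<subseteq> \<delta> I)"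
  shows "(P1 \<longleftrightarrow> P2) \<and> (P1 \<longleftrightarrow> P3) \<and> (P1 \<longleftrightarrow> P4)"
proof -
  have D: "P1 \<longleftrightarrow> (\<forall>a \<in> carrier R. \<forall>b \<in> carrier R.
        a \<otimes> b \<in> I \<longrightarrow> a \<notin> nilrad R \<longrightarrow> b \<in> \<delta> I)"
    using assms(3,4) unfolding P1_def delta_n_ideal_def by simp
  have 12: "P1 \<longleftrightarrow> P2"
  proof
    assume p: P1
    show P2 unfolding P2_def colon_def
    proof (intro ballI subsetI)
      fix a r assume a: "a \<in> carrier R - \<delta> I" and r: "r \<in> {r \<in> carrier R. r \<otimes> a \<in> I}"
      show "r \<in> nilrad R"
      proof (rule ccontr)
        assume "r \<notin> nilrad R"
        moreover have r1: "r \<in> carrier R" "r \<otimes> a \<in> I" using r by auto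
        moreover have a1: "a \<in> carrier R" "a \<notin> \<delta> I" using a by auto
        ultimately have "a \<in> \<delta> I" using p[unfolded D, rule_format, OF r1(1) a1(1) r1(2)] by simp
        then show False using a1(2) by simp
      qed
    qed
  next
    assume p: P2
    show P1 unfolding D
    proof (intro ballI impI)
      fix a b assume a: "a \<in> carrier R" and b: "b \<in> carrier R" and ab: "a \<otimes> b \<in> I"
        and n: "a \<notin> nilrad R"
      show "b \<in> \<delta> I"
      proof (rule ccontr)
        assume "b \<notin> \<delta> I"
        then have "b \<in> carrier R - \<delta> I" using b by simp
        then have "colon R I b \<subseteq> nilrad R" by (rule bspec[OF p[unfolded P2_def]])
        moreover have "a \<in> colon R I b" using a ab unfolding colon_def by simp
        ultimately show False using n by (meson subsetD)
      qed
    qed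
  qed
  have 13: "P1 \<longleftrightarrow> P3"
  proof
    assume p: P1
    show P3 unfolding P3_def
    proof (intro ballI allI impI)
      fix a J assume a: "a \<in> carrier R" and J: "ideal J R" and s: "(\<lambda>j. a \<otimes> j) ` J \<subseteq> I"
      have "J \<subseteq> carrier R" by (rule subsetI, rule ideal.Icarr[OF J])
      show "a \<in> nilrad R \<or> J \<subseteq> \<delta> I"
      proof (rule disjCI)
        assume n: "a \<notin> nilrad R"
        show "J \<subseteq> \<delta> I"
        proof (rule subsetI)
          fix j assume j: "j \<in> J"
          then have "j \<in> carrier R" "a \<otimes> j \<in> I" using \<open>J \<subseteq> carrier R\<close> s by auto
          then show "j \<in> \<delta> I" using p[unfolded D, rule_format, OF a] n by simp
        qed
      qed
    qed
  next
    assume p: P3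
    show P1 unfolding D
    proof (intro ballI impI)
      fix a b assume a: "a \<in> carrier R" and b: "b \<in> carrier R" and ab: "a \<otimes> b \<in> I"
        and n: "a \<notin> nilrad R"
      have "(\<lambda>j. a \<otimes> j) ` (PIdl b) \<subseteq> I"
      proof (rule subsetI)
        fix y assume "y \<in> (\<lambda>j. a \<otimes> j) ` (PIdl b)"
        then obtain x where x: "x \<in> carrier R" "y = a \<otimes> (x \<otimes> b)"
          unfolding cgenideal_def by auto
        have "y = x \<otimes> (a \<otimes> b)" using x a b by (simp add: m_ac)
        then show "y \<in> I" using ideal.I_l_closed[OF assms(3) ab x(1)] by simp
      qed
      then have "PIdl b \<subseteq> \<delta> I" using p[unfolded P3_def, rule_format, OF a cgenideal_ideal[OF b]] n by simp
      then show "b \<in> \<delta> I" using cgenideal_self[OF b] by (rule subsetD)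
    qed
  qed
  have 14: "P1 \<longleftrightarrow> P4"
  proof
    assume p: P1
    show P4 unfolding P4_def
    proof (intro allI impI)
      fix J K assume J: "ideal J R" and K: "ideal K R" and s: "J \<cdot> K \<subseteq> I"
      show "J \<inter> (carrier R - nilrad R) = {} \<or> K \<subseteq> \<delta> I"
      proof (rule disjCI)
        assume "J \<inter> (carrier R - nilrad R) \<noteq> {}"
        then obtain j where "j \<in> J \<inter> (carrier R - nilrad R)" by (meson ex_in_conv)
        then have j: "j \<in> J" "j \<in> carrier R" "j \<notin> nilrad R" by simp_all
        show "K \<subseteq> \<delta> I"
        proof (rule subsetI)
          fix k assume k: "k \<in> K"
          have "k \<in> carrier R" by (rule ideal.Icarr[OF K k])
          moreover have "j \<otimes> k \<in> I" by (rule subsetD[OF s ideal_prod.prod[OF j(1) k]])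
          ultimately show "k \<in> \<delta> I" using p[unfolded D, rule_format, OF j(2)] j(3) by simp
        qed
      qed
    qed
  next
    assume p: P4
    show P1 unfolding D
    proof (intro ballI impI)
      fix a b assume a: "a \<in> carrier R" and b: "b \<in> carrier R" and ab: "a \<otimes> b \<in> I"
        and n: "a \<notin> nilrad R"
      have "(PIdl a) \<cdot> (PIdl b) \<subseteq> I" using pidl_prod_sub[OF assms(3) a b ab] .
      moreover have "PIdl a \<inter> (carrier R - nilrad R) \<noteq> {}" using cgenideal_self[OF a] a n by (metis Diff_iff IntI empty_iff)
      ultimately have "PIdl b \<subseteq> \<delta> I"
        using p[unfolded P4_def, rule_format, OF cgenideal_ideal[OF a] cgenideal_ideal[OF b]] by simp
      then show "b \<in> \<delta> I" using cgenideal_self[OF b] by (rule subsetD)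
    qed
  qed
  show ?thesis using 12 13 14 by simp
qed


theorem theorem2p7:
  fixes R :: "('a, 'b) ring_scheme" and \<delta> :: "'a set \<Rightarrow> 'a set" and I :: "'a set"
  assumes "cring R" and "\<one>\<^bsub>R\<^esub> \<noteq> \<zero>\<^bsub>R\<^esub>"
    and "expansion R \<delta>"
    and "ideal I R" and "I \<noteq> carrier R"
  defines "P1 \<equiv> delta_n_ideal R \<delta> I"
    and "P2 \<equiv> (\<forall>a \<in> carrier R - \<delta> I. colon R I a \<subseteq> nilrad R)"
    and "P3 \<equiv> (\<forall>a \<in> carrier R. \<forall>J. ideal J R \<longrightarrow> (\<lambda>j. a \<otimes>\<^bsub>R\<^esub> j) ` J \<subseteq> I \<longrightarrow>
                 a \<in> nilrad R \<or> J \<subseteq> \<delta> I)"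
    and "P4 \<equiv> (\<forall>J K. ideal J R \<longrightarrow> ideal K R \<longrightarrow> J \<cdot>\<^bsub>R\<^esub> K \<subseteq> I \<longrightarrow>
                 J \<inter> (carrier R - nilrad R) = {} \<or> K \<subseteq> \<delta> I)"
  shows "(P1 \<longleftrightarrow> P2) \<and> (P1 \<longleftrightarrow> P3) \<and> (P1 \<longleftrightarrow> P4)"
  unfolding P1_def P2_def P3_def P4_def by (rule cring.main[OF assms(1-5)])

end
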